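(* Let $(M,d)$ be a metric space having an accumulation point, and let $0<c<1$. Then there exists a distance $\overline d$ on $M$ with $c\,d\leq\overline d\leq d$ such that the Weak Besicovitch Covering Property (and hence BCP) does not hold for $\overline d$.
   Context: Balls are closed, $B_d(p,r)=\{q:d(q,p)\le r\}$, with fixed center and radius. A family of Besicovitch balls is a finite family $\{B_d(x_B,r_B)\}$ of balls such that $x_B\notin B'$ for all distinct $B,B'$ in the family and the intersection of all its balls is nonempty. w-BCP holds for $d$ if there is an integer $N\ge1$ such that every family of Besicovitch balls has cardinality at most $N$. BCP holds for $d$ if there is $N\geq1$ such that for every bounded $A\subset M$ and every family $\mathcal B$ of balls such that each point of $A$ is the center of some ball of $\mathcal B$, there is a subfamily $\mathcal F\subset\mathcal B$ with $\chi_A\leq\sum_{B\in\mathcal F}\chi_B\leq N$. *)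

theory Defs
  imports "HOL-Analysis.Analysis"
begin

definition metric_on :: "'a set \<Rightarrow> ('a \<Rightarrow> 'a \<Rightarrow> real) \<Rightarrow> bool" where
  "metric_on M d \<longleftrightarrow>
     (\<forall>x\<in>M. \<forall>y\<in>M. 0 \<le> d x y) \<and>
     (\<forall>x\<in>M. \<forall>y\<in>M. d x y = 0 \<longleftrightarrow> x = y) \<and>
     (\<forall>x\<in>M. \<forall>y\<in>M. d x y = d y x) \<and>
     (\<forall>x\<in>M. \<forall>y\<in>M. \<forall>z\<in>M. d x z \<le> d x y + d y z)"

definition accumulation_point :: "'a set \<Rightarrow> ('a \<Rightarrow> 'a \<Rightarrow> real) \<Rightarrow> 'a \<Rightarrow> bool" where
  "accumulation_point M d p \<longleftrightarrow>
     p \<in> M \<and> (\<forall>e>0. \<exists>q\<in>M. q \<noteq> p \<and> d q p < e)"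

text \<open>A ball is given by its centre and radius (a pair); its point set is the closed ball.\<close>
definition is_ball :: "'a set \<Rightarrow> ('a \<times> real) \<Rightarrow> bool" where
  "is_ball M B \<longleftrightarrow> fst B \<in> M \<and> 0 < snd B"

definition cball_d :: "'a set \<Rightarrow> ('a \<Rightarrow> 'a \<Rightarrow> real) \<Rightarrow> ('a \<times> real) \<Rightarrow> 'a set" where
  "cball_d M d B = {q \<in> M. d q (fst B) \<le> snd B}"

definition besicovitch_family :: "'a set \<Rightarrow> ('a \<Rightarrow> 'a \<Rightarrow> real) \<Rightarrow> ('a \<times> real) set \<Rightarrow> bool" where
  "besicovitch_family M d F \<longleftrightarrow>
     finite F \<and> (\<forall>B\<in>F. is_ball M B) \<and>
     (\<forall>B\<in>F. \<forall>B'\<in>F. B \<noteq> B' \<longrightarrow> fst B \<notin> cball_d M d B') \<and>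
     (\<exists>p\<in>M. \<forall>B\<in>F. p \<in> cball_d M d B)"

definition wBCP :: "'a set \<Rightarrow> ('a \<Rightarrow> 'a \<Rightarrow> real) \<Rightarrow> bool" where
  "wBCP M d \<longleftrightarrow> (\<exists>N::nat. 1 \<le> N \<and> (\<forall>F. besicovitch_family M d F \<longrightarrow> card F \<le> N))"

definition bounded_d :: "'a set \<Rightarrow> ('a \<Rightarrow> 'a \<Rightarrow> real) \<Rightarrow> 'a set \<Rightarrow> bool" where
  "bounded_d M d A \<longleftrightarrow> A \<subseteq> M \<and> (\<exists>x\<in>M. \<exists>r. \<forall>a\<in>A. d a x \<le> r)"

text \<open>BCP: the sum of characteristic functions is written out as the number of
  balls of the subfamily containing the point (required to be finite).\<close>
definition BCP :: "'a set \<Rightarrow> ('a \<Rightarrow> 'a \<Rightarrow> real) \<Rightarrow> bool" where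
  "BCP M d \<longleftrightarrow> (\<exists>N::nat. 1 \<le> N \<and>
     (\<forall>A \<B>. bounded_d M d A \<and> (\<forall>B\<in>\<B>. is_ball M B) \<and> (\<forall>a\<in>A. \<exists>B\<in>\<B>. fst B = a) \<longrightarrow>
        (\<exists>\<F>\<subseteq>\<B>. \<forall>p\<in>M.
            (p \<in> A \<longrightarrow> (\<exists>B\<in>\<F>. p \<in> cball_d M d B)) \<and>
            finite {B\<in>\<F>. p \<in> cball_d M d B} \<and>
            card {B\<in>\<F>. p \<in> cball_d M d B} \<le> N)))"

end

theory Submission
  imports Defs
begin

lemma pts:
  assumes m: "metric_on M d" and ap: "accumulation_point M d p" and c: "0 < c" "c < 1"
  shows "\<exists>S. finite S \<and> card S = n \<and> S \<subseteq> M \<and> p \<notin> S \<and>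
     (\<forall>x\<in>S. \<forall>y\<in>S. x \<noteq> y \<longrightarrow> c * d x p < d x y \<and> c * d y p < d x y)"
proof (induction n)
  case 0
  show ?case by (rule exI[of _ "{}"]) auto
next
  case (Suc n)
  then obtain S where S: "finite S" "card S = n" "S \<subseteq> M" "p \<notin> S"
    "\<forall>x\<in>S. \<forall>y\<in>S. x \<noteq> y \<longrightarrow> c * d x p < d x y \<and> c * d y p < d x y" by blast
  have pM: "p \<in> M" using ap unfolding accumulation_point_def by blast
  have pos: "\<And>x. x \<in> S \<Longrightarrow> 0 < d x p"
  proof -
    fix x assume "x \<in> S"
    then have "x \<in> M" "x \<noteq> p" using S by auto
    then show "0 < d x p" using m pM unfolding metric_on_def
      by (metis order_le_less)
  qed
  define mm where "mm = (if S = {} then 1 else Min ((\<lambda>x. d x p) ` S))"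
  have mpos: "0 < mm" using pos S(1) unfolding mm_def by (auto simp: Min_gr_iff)
  have mle: "\<And>x. x \<in> S \<Longrightarrow> mm \<le> d x p" unfolding mm_def using S(1) by auto
  have "0 < (1 - c) * mm" using c mpos by simp
  then obtain q where q: "q \<in> M" "q \<noteq> p" "d q p < (1 - c) * mm"
    using ap unfolding accumulation_point_def by blast
  have q2: "d q p < mm - c * mm" using q(3) by (simp add: algebra_simps)
  have cm: "c * mm < mm" using c mpos by simp
  have cmpos: "0 < c * mm" using c mpos by simp
  have qS: "q \<notin> S"
  proof
    assume "q \<in> S"
    then have "mm \<le> d q p" by (rule mle)
    with q2 cm cmpos show False by linarith
  qed
  have key: "c * d x p < d x q \<and> c * d q p < d x q" if x: "x \<in> S" for x
  proof -
    have xM: "x \<in> M" using x S by auto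
    have tri: "d x p \<le> d x q + d q p" using m xM q pM unfolding metric_on_def by blast
    have a: "c * mm \<le> c * d x p" using mle[OF x] c by simp
    have "d q p \<le> d x p" using mle[OF x] q2 cm cmpos by linarith
    then have b: "c * d q p \<le> c * d x p" using c by simp
    have "mm \<le> d x p" using mle[OF x] .
    have "(1 - c) * mm \<le> (1 - c) * d x p" using mle[OF x] c by (intro mult_left_mono) auto
    then have e: "mm - c * mm \<le> d x p - c * d x p" by (simp add: algebra_simps)
    show ?thesis using tri a b q2 e by linarith
  qed
  have sym: "\<And>x. x \<in> M \<Longrightarrow> d x q = d q x" using m q unfolding metric_on_def by blast
  have pr: "\<forall>x\<in>insert q S. \<forall>y\<in>insert q S. x \<noteq> y \<longrightarrow> c * d x p < d x y \<and> c * d y p < d x y"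
  proof (intro ballI impI)
    fix x y assume x: "x \<in> insert q S" and y: "y \<in> insert q S" and xy: "x \<noteq> y"
    show "c * d x p < d x y \<and> c * d y p < d x y"
    proof (cases "x = q")
      case True
      then have yS: "y \<in> S" using y xy by auto
      then have "y \<in> M" using S by auto
      then show ?thesis using key[OF yS] sym[of y] True by simp
    next
      case False
      then have xS: "x \<in> S" using x by auto
      show ?thesis
      proof (cases "y = q")
        case True
        then show ?thesis using key[OF xS] by simp
      next
        case False
        then have "y \<in> S" using y by auto
        then show ?thesis using S(5) xS xy by blast
      qed
    qed
  qed
  have "finite (insert q S) \<and> card (insert q S) = Suc n \<and> insert q S \<subseteq> M \<and> p \<notin> insert q S"
    using S qS q by simp
  then show ?case using pr by blast
qed

lemma BCP_wBCP:
  assumes "BCP M d" shows "wBCP M d"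
proof -
  obtain N :: nat where NH: "1 \<le> N \<and>
     (\<forall>A \<B>. bounded_d M d A \<and> (\<forall>B\<in>\<B>. is_ball M B) \<and> (\<forall>a\<in>A. \<exists>B\<in>\<B>. fst B = a) \<longrightarrow>
        (\<exists>\<F>\<subseteq>\<B>. \<forall>p\<in>M.
            (p \<in> A \<longrightarrow> (\<exists>B\<in>\<F>. p \<in> cball_d M d B)) \<and>
            finite {B\<in>\<F>. p \<in> cball_d M d B} \<and>
            card {B\<in>\<F>. p \<in> cball_d M d B} \<le> N))"
    using assms unfolding BCP_def by (elim exE) (rule that)
  note N = NH[THEN conjunct1]
  have "card F \<le> N" if F: "besicovitch_family M d F" for F
  proof -
    from F have fin: "finite F" and balls: "\<forall>B\<in>F. is_ball M B"
      and sep: "\<forall>B\<in>F. \<forall>B'\<in>F. B \<noteq> B' \<longrightarrow> fst B \<notin> cball_d M d B'"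
      and "\<exists>p\<in>M. \<forall>B\<in>F. p \<in> cball_d M d B"
      unfolding besicovitch_family_def by auto
    then obtain p where pM: "p \<in> M" and pB: "\<forall>B\<in>F. p \<in> cball_d M d B" by blast
    have AM: "fst ` F \<subseteq> M" using balls unfolding is_ball_def by auto
    have bd: "bounded_d M d (fst ` F)"
      unfolding bounded_d_def
    proof (intro conjI AM bexI[OF _ pM] exI ballI)
      fix a assume "a \<in> fst ` F"
      then show "d a p \<le> Max (insert 0 ((\<lambda>a. d a p) ` fst ` F))"
        using fin by (intro Max_ge) auto
    qed
    obtain \<F> where sub: "\<F> \<subseteq> F" and P: "\<forall>q\<in>M.
            (q \<in> fst ` F \<longrightarrow> (\<exists>B\<in>\<F>. q \<in> cball_d M d B)) \<and>
            finite {B\<in>\<F>. q \<in> cball_d M d B} \<and>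
            card {B\<in>\<F>. q \<in> cball_d M d B} \<le> N"
      using NH[THEN conjunct2, THEN spec, THEN spec, of "fst ` F" F] bd balls by auto
    have "F \<subseteq> \<F>"
    proof
      fix B assume B: "B \<in> F"
      then have "fst B \<in> M" using AM by auto
      then obtain B' where B': "B' \<in> \<F>" "fst B \<in> cball_d M d B'" using P B by blast
      show "B \<in> \<F>"
      proof (rule ccontr)
        assume "B \<notin> \<F>"
        then have "B \<noteq> B'" using B'(1) by auto
        moreover have "B' \<in> F" using B'(1) sub by auto
        ultimately have "fst B \<notin> cball_d M d B'" using sep B by blast
        then show False using B'(2) by contradiction
      qed
    qed
    then have "{B\<in>\<F>. p \<in> cball_d M d B} = F" using sub pB by blast
    then show ?thesis using P pM by metis
  qed
  then show ?thesis unfolding wBCP_def using N by blast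
qed

theorem theorem1p3:
  fixes M :: "'a set" and d :: "'a \<Rightarrow> 'a \<Rightarrow> real" and c :: real
  assumes "metric_on M d"
    and "\<exists>p. accumulation_point M d p"
    and "0 < c" and "c < 1"
  shows "\<exists>d'. metric_on M d' \<and>
           (\<forall>x\<in>M. \<forall>y\<in>M. c * d x y \<le> d' x y \<and> d' x y \<le> d x y) \<and>
           \<not> wBCP M d' \<and> \<not> BCP M d'"
proof -
  note m = assms(1) and c = assms(3,4)
  obtain p where ap: "accumulation_point M d p" using assms(2) by blast
  have pM: "p \<in> M" using ap unfolding accumulation_point_def by blast
  note mm = m[unfolded metric_on_def]
  have nn: "\<And>x y. x \<in> M \<Longrightarrow> y \<in> M \<Longrightarrow> 0 \<le> d x y"
    using mm[THEN conjunct1] by blast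
  have z: "\<And>x y. x \<in> M \<Longrightarrow> y \<in> M \<Longrightarrow> d x y = 0 \<longleftrightarrow> x = y"
    using mm[THEN conjunct2, THEN conjunct1] by blast
  have sy: "\<And>x y. x \<in> M \<Longrightarrow> y \<in> M \<Longrightarrow> d x y = d y x"
    using mm[THEN conjunct2, THEN conjunct2, THEN conjunct1] by blast
  have tr: "\<And>x y z. x \<in> M \<Longrightarrow> y \<in> M \<Longrightarrow> z \<in> M \<Longrightarrow> d x z \<le> d x y + d y z"
    using mm[THEN conjunct2, THEN conjunct2, THEN conjunct2] by blast
  define D where "D = (\<lambda>x y. if x = y then 0 else min (d x y) (c * (d x p + d y p)))"
  have Dne: "\<And>x y. x \<noteq> y \<Longrightarrow> D x y = min (d x y) (c * (d x p + d y p))"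
    unfolding D_def by simp
  have met: "metric_on M D"
    unfolding metric_on_def
  proof (intro conjI ballI)
    fix x y assume xy: "x \<in> M" "y \<in> M"
    show "0 \<le> D x y" unfolding D_def using nn[OF xy] nn[OF xy(1) pM] nn[OF xy(2) pM] c by auto
    show "D x y = D y x" unfolding D_def using sy[OF xy] by (auto simp: add.commute)
    show "(D x y = 0) = (x = y)"
    proof
      assume "D x y = 0"
      show "x = y"
      proof (rule ccontr)
        assume ne: "x \<noteq> y"
        then have "0 < d x y" using z[OF xy] nn[OF xy] by force
        moreover have "0 < d x p + d y p"
          using ne z[OF xy(1) pM] z[OF xy(2) pM] nn[OF xy(1) pM] nn[OF xy(2) pM] by force
        then have "0 < c * (d x p + d y p)" using c by simp
        ultimately show False using \<open>D x y = 0\<close> Dne[OF ne] by linarith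
      qed
    qed (simp add: D_def)
  next
    fix x y w assume xyw: "x \<in> M" "y \<in> M" "w \<in> M"
    show "D x w \<le> D x y + D y w"
    proof (cases "x = y \<or> y = w \<or> x = w")
      case True
      have "0 \<le> D x y" "0 \<le> D y w"
        unfolding D_def using nn xyw pM c by auto
      then show ?thesis using True unfolding D_def by auto
    next
      case False
      then have ne: "x \<noteq> y" "y \<noteq> w" "x \<noteq> w" by auto
      have t1: "d x w \<le> d x y + d y w" using tr xyw by blast
      have t2: "d x p \<le> d x y + d y p" using tr xyw pM by blast
      have t3: "d w p \<le> d w y + d y p" using tr xyw pM by blast
      have s1: "d w y = d y w" using sy xyw by blast
      have c1: "c * d x p \<le> c * d x y + c * d y p" using mult_left_mono[OF t2, of c] c
        by (simp add: algebra_simps)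
      have c2: "c * d w p \<le> c * d y w + c * d y p" using mult_left_mono[OF t3, of c] c s1
        by (simp add: algebra_simps)
      have c3: "c * d x y \<le> d x y" using c nn[of x y] xyw by (simp add: mult_left_le_one_le)
      have c4: "c * d y w \<le> d y w" using c nn[of y w] xyw by (simp add: mult_left_le_one_le)
      have c5: "0 \<le> c * d y p" using c nn[of y p] xyw pM by simp
      show ?thesis unfolding Dne[OF ne(1)] Dne[OF ne(2)] Dne[OF ne(3)]
        using t1 c1 c2 c3 c4 c5 by (simp add: algebra_simps min_def)
    qed
  qed
  have bnd: "\<forall>x\<in>M. \<forall>y\<in>M. c * d x y \<le> D x y \<and> D x y \<le> d x y"
  proof (intro ballI)
    fix x y assume xy: "x \<in> M" "y \<in> M"
    show "c * d x y \<le> D x y \<and> D x y \<le> d x y"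
    proof (cases "x = y")
      case True then show ?thesis using z[OF xy] unfolding D_def by simp
    next
      case False
      have t: "d x y \<le> d x p + d p y" using tr xy pM by blast
      have "c * d x y \<le> c * (d x p + d y p)" using mult_left_mono[OF t, of c] c sy[OF xy(2) pM] by simp
      moreover have "c * d x y \<le> d x y" using c nn[OF xy] by (simp add: mult_left_le_one_le)
      ultimately show ?thesis unfolding Dne[OF False] by simp
    qed
  qed
  have nw: "\<not> wBCP M D"
  proof
    assume "wBCP M D"
    then obtain N where N: "\<And>F. besicovitch_family M D F \<Longrightarrow> card F \<le> N"
      unfolding wBCP_def by blast
    obtain S where S: "finite S" "card S = Suc N" "S \<subseteq> M" "p \<notin> S"
      "\<forall>x\<in>S. \<forall>y\<in>S. x \<noteq> y \<longrightarrow> c * d x p < d x y \<and> c * d y p < d x y"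
      using pts[OF m ap c, of "Suc N"] by blast
    have pos: "\<And>x. x \<in> S \<Longrightarrow> 0 < d x p"
    proof -
      fix x assume "x \<in> S"
      then have "x \<in> M" "x \<noteq> p" using S by auto
      then show "0 < d x p" using z[of x p] nn[of x p] pM by force
    qed
    define F where "F = (\<lambda>x. (x, c * d x p)) ` S"
    have cardF: "card F = Suc N" unfolding F_def using S
      by (subst card_image) (auto simp: inj_on_def)
    have Dp: "\<And>x. x \<in> S \<Longrightarrow> D p x = c * d x p"
    proof -
      fix x assume x: "x \<in> S"
      then have "p \<noteq> x" "x \<in> M" using S by auto
      moreover have "c * d x p \<le> d x p" using c pos[OF x] by simp
      ultimately show "D p x = c * d x p" using Dne[of p x] z[OF pM pM] sy[of x p] pM by simp
    qed
    have "besicovitch_family M D F"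
      unfolding besicovitch_family_def
    proof (intro conjI ballI impI bexI[OF _ pM])
      show "finite F" unfolding F_def using S by simp
    next
      fix B assume "B \<in> F"
      then obtain x where x: "x \<in> S" "B = (x, c * d x p)" unfolding F_def by blast
      show "is_ball M B" unfolding is_ball_def using x S pos[OF x(1)] c by auto
      show "p \<in> cball_d M D B" unfolding cball_d_def using x Dp pM by simp
    next
      fix B B' assume B: "B \<in> F" and B': "B' \<in> F" and ne: "B \<noteq> B'"
      obtain x where x: "x \<in> S" "B = (x, c * d x p)" using B unfolding F_def by blast
      obtain y where y: "y \<in> S" "B' = (y, c * d y p)" using B' unfolding F_def by blast
      have xy: "x \<noteq> y" using x y ne by auto
      have "c * d y p < d x y" using S(5) x y xy by blast
      moreover have "c * d y p < c * (d x p + d y p)" using pos[OF x(1)] c by simp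
      ultimately have "c * d y p < D x y" unfolding Dne[OF xy] by simp
      then show "fst B \<notin> cball_d M D B'" unfolding cball_d_def using x y by simp
    qed
    then have "card F \<le> N" by (rule N)
    then show False using cardF by simp
  qed
  have "\<not> BCP M D" using nw BCP_wBCP by blast
  then show ?thesis using met bnd nw by blast
qed

end
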